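(* Fix a positive integer $n$, a covertness threshold $\delta>0$, and risk budgets $\epsilon_{\text{cov}},\epsilon_{\text{rel}}\in(0,1)$. Let $(\eta,\overline{n}_B)$ be a random pair (with arbitrary joint distribution) taking values in $(0,1)\times[0,\infty)$, and let $c_{\text{cov}}=c_{\text{cov}}(\eta,\overline{n}_B)$ and $R_{\text{ach}}=R_{\text{ach}}(\eta,\overline{n}_B)$ be the induced random variables (defined in the context). Consider the risk-constrained program \[ \max_{q,R}\; T(q,R)=qR \quad\text{s.t.}\quad \mathbb{P}\!\left[q>\tfrac{2\delta}{\sqrt{n}}\,c_{\text{cov}}\right]\le\epsilon_{\text{cov}},\quad \mathbb{P}\!\left[R>R_{\text{ach}}\right]\le\epsilon_{\text{rel}},\quad 0\le q\le 1,\ 0\le R\le 1. \] For a real random variable $X$ define $F_X^{<}(x)=\mathbb{P}[X<x]$ and $Q_X^{<}(\epsilon)=\sup\{x\in\mathbb{R}: F_X^{<}(x)\le\epsilon\}$. Set \[ q_{\max}=\min\!\left\{1,\ \frac{2\delta}{\sqrt{n}}\,Q^{<}_{c_{\text{cov}}}(\epsilon_{\text{cov}})\right\},\qquad R_{\max}=Q^{<}_{R_{\text{ach}}}(\epsilon_{\text{rel}}). \] Then an optimal strategy is $(q^*,R^* )=(q_{\max},R_{\max})$, and the maximum per-use covert throughput is $T^*=q^*R^*=q_{\max}R_{\max}$. This holds for arbitrary distributions of $(\eta,\overline{n}_B)$, including cases where the distributions of $c_{\text{cov}}$ or $R_{\text{ach}}$ have atoms.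
   Context: Definitions: for $\eta\in(0,1)$ and $\overline{n}_B\ge0$, the covertness constant is $c_{\text{cov}}(\eta,\overline{n}_B)=\dfrac{\sqrt{2\eta\overline{n}_B(1+\eta\overline{n}_B)}}{1-\eta}$. The depolarizing probability is $p(\eta,\overline{n}_B)=1-\dfrac{\eta}{[1+(1-\eta)\overline{n}_B]^4}$, with Pauli error vector $\vec p=(1-\tfrac{3p}{4},\tfrac p4,\tfrac p4,\tfrac p4)$ and Shannon entropy $H(\vec p)=-\sum_i p_i\log_2 p_i$ (with $0\log 0=0$). The instantaneous achievable rate is $R_{\text{ach}}(\eta,\overline{n}_B)=(1-H(\vec p(\eta,\overline{n}_B)))^+$, where $(x)^+=\max(x,0)$. Here $q$ is the per-channel-use transmission probability and $R$ is the chosen code rate; all probabilities are over the randomness of $(\eta,\overline{n}_B)$. *)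

theory Defs
  imports "HOL-Probability.Probability"
begin

definition c_cov :: "real \<Rightarrow> real \<Rightarrow> real" where
  "c_cov eta nB = sqrt (2 * eta * nB * (1 + eta * nB)) / (1 - eta)"

definition p_dep :: "real \<Rightarrow> real \<Rightarrow> real" where
  "p_dep eta nB = 1 - eta / (1 + (1 - eta) * nB) ^ 4"

definition pauli_vec :: "real \<Rightarrow> real list" where
  "pauli_vec p = [1 - 3 * p / 4, p / 4, p / 4, p / 4]"

definition shannon_H :: "real list \<Rightarrow> real" where
  "shannon_H ps = - sum_list (map (\<lambda>x. if x = 0 then 0 else x * log 2 x) ps)"

definition R_ach :: "real \<Rightarrow> real \<Rightarrow> real" where
  "R_ach eta nB = max (1 - shannon_H (pauli_vec (p_dep eta nB))) 0"

definition F_lt :: "'a measure \<Rightarrow> ('a \<Rightarrow> real) \<Rightarrow> real \<Rightarrow> real" where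
  "F_lt M X x = measure M {\<omega> \<in> space M. X \<omega> < x}"

definition Q_lt :: "'a measure \<Rightarrow> ('a \<Rightarrow> real) \<Rightarrow> real \<Rightarrow> real" where
  "Q_lt M X eps = Sup {x. F_lt M X x \<le> eps}"

definition feasible ::
  "'a measure \<Rightarrow> nat \<Rightarrow> real \<Rightarrow> real \<Rightarrow> real \<Rightarrow> ('a \<Rightarrow> real) \<Rightarrow> ('a \<Rightarrow> real) \<Rightarrow> real \<Rightarrow> real \<Rightarrow> bool" where
  "feasible M n \<delta> eps_cov eps_rel eta nB q R \<longleftrightarrow>
     measure M {\<omega> \<in> space M. q > 2 * \<delta> / sqrt (real n) * c_cov (eta \<omega>) (nB \<omega>)} \<le> eps_cov
   \<and> measure M {\<omega> \<in> space M. R > R_ach (eta \<omega>) (nB \<omega>)} \<le> eps_rel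
   \<and> 0 \<le> q \<and> q \<le> 1 \<and> 0 \<le> R \<and> R \<le> 1"

end

theory Submission
  imports Defs
begin

lemma quant_props:
  fixes M :: "'a measure" and X :: "'a \<Rightarrow> real"
  assumes P: "prob_space M" and Xm: "X \<in> borel_measurable M"
    and nn: "\<forall>\<omega>\<in>space M. 0 \<le> X \<omega>" and e0: "0 < eps" and e1: "eps < 1"
  shows "0 \<le> Q_lt M X eps" "F_lt M X (Q_lt M X eps) \<le> eps"
    "\<And>x. F_lt M X x \<le> eps \<Longrightarrow> x \<le> Q_lt M X eps"
proof -
  interpret prob_space M by (rule P)
  let ?S = "{x. F_lt M X x \<le> eps}"
  have mono: "F_lt M X x \<le> F_lt M X y" if "x \<le> y" for x y
    unfolding F_lt_def using that
    by (intro finite_measure_mono) (use Xm in auto)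
  have zero: "F_lt M X 0 = 0"
  proof -
    have "{\<omega> \<in> space M. X \<omega> < 0} = {}" using nn by force
    thus ?thesis unfolding F_lt_def by (simp only:) simp
  qed
  have "(\<lambda>i. measure M {\<omega> \<in> space M. X \<omega> < real i}) \<longlonglongrightarrow> measure M (\<Union>i. {\<omega> \<in> space M. X \<omega> < real i})"
    by (intro finite_Lim_measure_incseq) (use Xm in \<open>auto simp: incseq_def intro: order.strict_trans2\<close>)
  moreover have "(\<Union>i. {\<omega> \<in> space M. X \<omega> < real i}) = space M"
    using reals_Archimedean2 by auto
  ultimately have lim: "(\<lambda>i. F_lt M X (real i)) \<longlonglongrightarrow> 1"
    unfolding F_lt_def using prob_space by simp
  then obtain N where N: "F_lt M X (real N) > eps"
    using e1 by (metis (no_types, lifting) eventually_sequentially less_eq_real_def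
        order_tendstoD(1) order_refl)
  have bdd: "x \<le> real N" if "x \<in> ?S" for x
  proof (rule ccontr)
    assume "\<not> x \<le> real N"
    hence "F_lt M X (real N) \<le> F_lt M X x" by (intro mono) simp
    thus False using that N by simp
  qed
  have ne: "0 \<in> ?S" using zero e0 by simp
  have bddS: "bdd_above ?S" using bdd by (intro bdd_aboveI[where M="real N"]) auto
  show Q0: "0 \<le> Q_lt M X eps" unfolding Q_lt_def using ne bddS by (rule cSup_upper)
  show "\<And>x. F_lt M X x \<le> eps \<Longrightarrow> x \<le> Q_lt M X eps"
    unfolding Q_lt_def using bddS by (intro cSup_upper) auto
  let ?Q = "Q_lt M X eps"
  have each: "F_lt M X (?Q - 1 / (real m + 1)) \<le> eps" for m
  proof -
    have "?Q - 1 / (real m + 1) < Sup ?S" unfolding Q_lt_def by simp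
    then obtain y where "y \<in> ?S" "?Q - 1 / (real m + 1) < y"
      using less_cSup_iff[OF _ bddS] ne by blast
    thus ?thesis using mono[of "?Q - 1 / (real m + 1)" y] by simp
  qed
  have "(\<lambda>m. measure M {\<omega> \<in> space M. X \<omega> < ?Q - 1 / (real m + 1)}) \<longlonglongrightarrow>
        measure M (\<Union>m. {\<omega> \<in> space M. X \<omega> < ?Q - 1 / (real m + 1)})"
  proof (intro finite_Lim_measure_incseq)
    show "incseq (\<lambda>m. {\<omega> \<in> space M. X \<omega> < ?Q - 1 / (real m + 1)})"
    proof (rule incseq_SucI, safe)
      fix m \<omega> assume "\<omega> \<in> space M" "X \<omega> < ?Q - 1 / (real m + 1)"
      moreover have "1 / (real (Suc m) + 1) \<le> 1 / (real m + 1)"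
        by (intro divide_left_mono) auto
      ultimately show "X \<omega> < ?Q - 1 / (real (Suc m) + 1)" by linarith
    qed
  qed (use Xm in auto)
  moreover have "(\<Union>m. {\<omega> \<in> space M. X \<omega> < ?Q - 1 / (real m + 1)}) = {\<omega> \<in> space M. X \<omega> < ?Q}"
  proof safe
    fix \<omega> assume w: "\<omega> \<in> space M" "X \<omega> < ?Q"
    then obtain m where m: "1 / (real m + 1) < ?Q - X \<omega>"
    proof -
      obtain k :: nat where "1 / (?Q - X \<omega>) < real k" using reals_Archimedean2 by blast
      hence "1 / (real k + 1) < ?Q - X \<omega>" using w(2)
        by (simp add: field_simps)
      thus ?thesis using that by blast
    qed
    show "\<omega> \<in> (\<Union>m. {\<omega> \<in> space M. X \<omega> < ?Q - 1 / (real m + 1)})"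
    proof -
      have "X \<omega> < ?Q - 1 / (real m + 1)" using m by linarith
      thus ?thesis using w by blast
    qed
  next
    fix \<omega> m assume "X \<omega> < ?Q - 1 / (real m + 1)"
    moreover have "0 < 1 / (real m + 1)" by simp
    ultimately show "X \<omega> < ?Q" by linarith
  qed
  ultimately have "(\<lambda>m. F_lt M X (?Q - 1 / (real m + 1))) \<longlonglongrightarrow> F_lt M X ?Q"
    unfolding F_lt_def by simp
  thus "F_lt M X ?Q \<le> eps" using each by (intro LIMSEQ_le_const2) auto
qed

lemma R_ach_le1:
  assumes "0 < eta" "eta < 1" "0 \<le> nB"
  shows "R_ach eta nB \<le> 1" "0 \<le> R_ach eta nB"
proof -
  let ?p = "p_dep eta nB"
  have d: "1 \<le> (1 + (1 - eta) * nB) ^ 4" using assms by (simp add: one_le_power)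
  have "eta / (1 + (1 - eta) * nB) ^ 4 \<le> eta" using d assms
    by (simp add: divide_le_eq)
  moreover have "0 \<le> eta / (1 + (1 - eta) * nB) ^ 4" using d assms by simp
  ultimately have p: "0 \<le> ?p" "?p \<le> 1" using assms unfolding p_dep_def by linarith+
  have t: "(if x = 0 then 0 else x * log 2 x) \<le> 0" if "0 \<le> x" "x \<le> 1" for x :: real
  proof (cases "x = 0")
    case False
    hence "log 2 x \<le> 0" using that by simp
    thus ?thesis using that False by (simp add: mult_nonneg_nonpos)
  qed simp
  have "0 \<le> shannon_H (pauli_vec ?p)"
    unfolding shannon_H_def pauli_vec_def
    using t[of "1 - 3 * ?p / 4"] t[of "?p / 4"] p by simp
  thus "R_ach eta nB \<le> 1" unfolding R_ach_def by simp
  show "0 \<le> R_ach eta nB" unfolding R_ach_def by simp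
qed

theorem theorem1:
  fixes M :: "'a measure" and eta nB :: "'a \<Rightarrow> real"
    and n :: nat and \<delta> eps_cov eps_rel :: real
  assumes "prob_space M"
    and "eta \<in> borel_measurable M" and "nB \<in> borel_measurable M"
    and "\<forall>\<omega>\<in>space M. 0 < eta \<omega> \<and> eta \<omega> < 1 \<and> 0 \<le> nB \<omega>"
    and "0 < n" and "0 < \<delta>"
    and "0 < eps_cov" and "eps_cov < 1" and "0 < eps_rel" and "eps_rel < 1"
  shows "let q_max = min 1 (2 * \<delta> / sqrt (real n) *
                 Q_lt M (\<lambda>\<omega>. c_cov (eta \<omega>) (nB \<omega>)) eps_cov);
             R_max = Q_lt M (\<lambda>\<omega>. R_ach (eta \<omega>) (nB \<omega>)) eps_rel
         in feasible M n \<delta> eps_cov eps_rel eta nB q_max R_max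
            \<and> (\<forall>q R. feasible M n \<delta> eps_cov eps_rel eta nB q R \<longrightarrow> q * R \<le> q_max * R_max)"
proof -
  note A = assms
  interpret prob_space M by (rule A(1))
  define X where "X = (\<lambda>\<omega>. c_cov (eta \<omega>) (nB \<omega>))"
  define Y where "Y = (\<lambda>\<omega>. R_ach (eta \<omega>) (nB \<omega>))"
  define c where "c = 2 * \<delta> / sqrt (real n)"
  have c0: "0 < c" unfolding c_def using A by simp
  have Xm: "X \<in> borel_measurable M" unfolding X_def c_cov_def using A(2,3) by measurable
  have Ym: "Y \<in> borel_measurable M" unfolding Y_def R_ach_def shannon_H_def pauli_vec_def p_dep_def
    using A(2,3) by simp measurable
  have Xnn: "\<forall>\<omega>\<in>space M. 0 \<le> X \<omega>" unfolding X_def c_cov_def using A(4) by (auto intro!: divide_nonneg_pos)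
  have Ynn: "\<forall>\<omega>\<in>space M. 0 \<le> Y \<omega>" unfolding Y_def using A(4) R_ach_le1 by blast
  have Y1: "\<forall>\<omega>\<in>space M. Y \<omega> \<le> 1" unfolding Y_def using A(4) R_ach_le1 by blast
  note QX = quant_props[OF A(1) Xm Xnn A(7,8)]
  note QY = quant_props[OF A(1) Ym Ynn A(9,10)]
  define QC where "QC = Q_lt M X eps_cov"
  define QR where "QR = Q_lt M Y eps_rel"
  define qm where "qm = min 1 (c * QC)"
  have QR1: "QR \<le> 1"
  proof (rule ccontr)
    assume "\<not> QR \<le> 1"
    have "{\<omega> \<in> space M. Y \<omega> < QR} = space M" using Y1 \<open>\<not> QR \<le> 1\<close> by force
    hence "F_lt M Y QR = 1" unfolding F_lt_def using prob_space by simp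
    thus False using QY(2) A(10) unfolding QR_def by simp
  qed
  have feas: "feasible M n \<delta> eps_cov eps_rel eta nB qm QR"
    unfolding feasible_def
  proof (intro conjI)
    have "measure M {\<omega> \<in> space M. qm > c * X \<omega>} \<le> measure M {\<omega> \<in> space M. X \<omega> < QC}"
    proof (intro finite_measure_mono)
      show "{\<omega> \<in> space M. qm > c * X \<omega>} \<subseteq> {\<omega> \<in> space M. X \<omega> < QC}"
      proof safe
        fix \<omega> assume "qm > c * X \<omega>"
        hence "c * X \<omega> < c * QC" unfolding qm_def by simp
        thus "X \<omega> < QC" using c0 by simp
      qed
    qed (use Xm in measurable)
    also have "\<dots> \<le> eps_cov" using QX(2) unfolding F_lt_def QC_def by simp
    finally show "measure M {\<omega> \<in> space M. qm > 2 * \<delta> / sqrt (real n) * c_cov (eta \<omega>) (nB \<omega>)} \<le> eps_cov"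
      unfolding c_def X_def .
    show "measure M {\<omega> \<in> space M. QR > R_ach (eta \<omega>) (nB \<omega>)} \<le> eps_rel"
      using QY(2) unfolding F_lt_def QR_def Y_def by simp
    show "0 \<le> qm" unfolding qm_def QC_def using QX(1) c0 by simp
    show "qm \<le> 1" unfolding qm_def by simp
    show "0 \<le> QR" unfolding QR_def using QY(1) .
    show "QR \<le> 1" by (rule QR1)
  qed
  have opt: "q * R \<le> qm * QR" if f: "feasible M n \<delta> eps_cov eps_rel eta nB q R" for q R
  proof -
    from f have f1: "measure M {\<omega> \<in> space M. q > c * X \<omega>} \<le> eps_cov"
      and f2: "F_lt M Y R \<le> eps_rel" and q0: "0 \<le> q" "q \<le> 1" and R0: "0 \<le> R"
      unfolding feasible_def c_def X_def F_lt_def Y_def by auto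
    have "{\<omega> \<in> space M. q > c * X \<omega>} = {\<omega> \<in> space M. X \<omega> < q / c}"
      using c0 by (auto simp: field_simps)
    hence "F_lt M X (q / c) \<le> eps_cov" using f1 unfolding F_lt_def by simp
    hence "q / c \<le> QC" using QX(3) unfolding QC_def by blast
    hence "q \<le> c * QC" using c0 by (simp add: field_simps)
    hence qq: "q \<le> qm" unfolding qm_def using q0 by simp
    have RR: "R \<le> QR" using QY(3)[OF f2] unfolding QR_def .
    show ?thesis using qq RR q0 R0 by (intro mult_mono) auto
  qed
  show ?thesis unfolding Let_def
    using feas opt unfolding qm_def QC_def QR_def X_def Y_def c_def by blast
qed

end
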